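(* Let $\beta\in\mathbb{R}$ and $\psi\in B\cap\Theta_1$, and suppose that either $\Delta^2(1/\psi(k))\ge0$ for all $k\in\mathbb{N}$, or $\Delta^2(1/\psi(k))\le0$ for all $k\in\mathbb{N}$. Then there exist positive quantities $K^{(1)}_\psi$, $K^{(2)}_\psi$, depending only on $\psi$, such that for all $n\in\mathbb{N}$ $$K^{(2)}_\psi\,\psi(n)\,n\le E_n\big(C^{\psi}_{\beta,1}\big)_C\le\mathcal{E}_n\big(C^{\psi}_{\beta,1}\big)_C\le K^{(1)}_\psi\,\psi(n)\,n.$$
   Context: All functions are $2\pi$-periodic. $L_p$ ($1\le p\le\infty$) is the space of $2\pi$-periodic measurable functions with finite norm $\|f\|_p=\big(\int_0^{2\pi}|f|^p\big)^{1/p}$ for $p<\infty$ and $\|f\|_\infty=\operatorname{ess\,sup}|f|$; $C$ is the space of continuous $2\pi$-periodic functions with $\|f\|_C=\max|f|$. Let $\psi(t)>0$ be a continuous function of $t\ge1$; $\psi(k)$ denotes its values at positive integers, and $\Delta^2(1/\psi(k))=\frac1{\psi(k)}-\frac2{\psi(k+1)}+\frac1{\psi(k+2)}$. For $\beta\in\mathbb{R}$, $\Psi_\beta$ is the summable function with Fourier series $\sum_{k=1}^\infty\psi(k)\cos(kt-\beta\pi/2)$. When $\Psi_\beta\in L_\infty$, $C^{\psi}_{\beta,1}$ denotes the class of (continuous) functions $f(x)=\frac{a_0}{2}+\frac1\pi\int_{-\pi}^{\pi}\Psi_\beta(x-t)\varphi(t)\,dt$ with $a_0\in\mathbb{R}$,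 $\int_{-\pi}^{\pi}\varphi=0$, $\|\varphi\|_1\le1$. $\mathcal{T}_{2n-1}$ is the space of trigonometric polynomials of degree at most $n-1$, $S_{n-1}(f)$ is the Fourier partial sum of order $n-1$, $\mathcal{E}_n(C^{\psi}_{\beta,1})_C=\sup_{f\in C^{\psi}_{\beta,1}}\|f-S_{n-1}(f)\|_C$, $E_n(C^{\psi}_{\beta,1})_C=\sup_{f\in C^{\psi}_{\beta,1}}\inf_{t\in\mathcal{T}_{2n-1}}\|f-t\|_C$. $B$ is the set of positive nonincreasing functions $\psi$ on $[1,\infty)$ with $\psi(t)/\psi(2t)\le K$ for some constant $K$ and all $t\ge1$. $\Theta_1$ is the set of nonincreasing functions $\psi$ on $[1,\infty)$ for which there exists $\alpha>1$ and $K>0$ with $t_1^\alpha\psi(t_1)\le K t_2^\alpha\psi(t_2)$ for all $t_1>t_2\ge1$. *)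

theory Defs
  imports "HOL-Analysis.Analysis"
begin

definition class_B :: "(real \<Rightarrow> real) set" where
  "class_B = {\<psi>. (\<forall>t\<ge>1. \<psi> t > 0) \<and> (\<forall>s t. 1 \<le> s \<and> s \<le> t \<longrightarrow> \<psi> t \<le> \<psi> s) \<and>
                 (\<exists>K. \<forall>t\<ge>1. \<psi> t / \<psi> (2 * t) \<le> K)}"

definition class_Theta1 :: "(real \<Rightarrow> real) set" where
  "class_Theta1 = {\<psi>. (\<forall>s t. 1 \<le> s \<and> s \<le> t \<longrightarrow> \<psi> t \<le> \<psi> s) \<and>
      (\<exists>\<alpha> K. \<alpha> > 1 \<and> K > 0 \<and>
         (\<forall>t1 t2. t1 > t2 \<and> t2 \<ge> 1 \<longrightarrow> t1 powr \<alpha> * \<psi> t1 \<le> K * (t2 powr \<alpha> * \<psi> t2)))}"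

definition Delta2_inv :: "(real \<Rightarrow> real) \<Rightarrow> nat \<Rightarrow> real" where
  "Delta2_inv \<psi> k = 1 / \<psi> (real k) - 2 / \<psi> (real (k + 1)) + 1 / \<psi> (real (k + 2))"

definition Psi_kernel :: "(real \<Rightarrow> real) \<Rightarrow> real \<Rightarrow> real \<Rightarrow> real" where
  "Psi_kernel \<psi> \<beta> t = (\<Sum>k. \<psi> (real (Suc k)) * cos (real (Suc k) * t - \<beta> * pi / 2))"

definition C_class :: "(real \<Rightarrow> real) \<Rightarrow> real \<Rightarrow> (real \<Rightarrow> real) set" where
  "C_class \<psi> \<beta> = {f. \<exists>a0 \<phi>. (\<forall>x. \<phi> (x + 2 * pi) = \<phi> x) \<and>
        \<phi> absolutely_integrable_on {-pi..pi} \<and>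
        integral {-pi..pi} \<phi> = 0 \<and>
        integral {-pi..pi} (\<lambda>t. \<bar>\<phi> t\<bar>) \<le> 1 \<and>
        (\<forall>x. f x = a0 / 2 + (1 / pi) * integral {-pi..pi} (\<lambda>t. Psi_kernel \<psi> \<beta> (x - t) * \<phi> t))}"

definition fourier_cos :: "(real \<Rightarrow> real) \<Rightarrow> nat \<Rightarrow> real" where
  "fourier_cos f k = (1 / pi) * integral {-pi..pi} (\<lambda>t. f t * cos (real k * t))"

definition fourier_sin :: "(real \<Rightarrow> real) \<Rightarrow> nat \<Rightarrow> real" where
  "fourier_sin f k = (1 / pi) * integral {-pi..pi} (\<lambda>t. f t * sin (real k * t))"

definition fourier_partial_sum :: "(real \<Rightarrow> real) \<Rightarrow> nat \<Rightarrow> real \<Rightarrow> real" where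
  "fourier_partial_sum f m x = fourier_cos f 0 / 2 +
     (\<Sum>k=1..m. fourier_cos f k * cos (real k * x) + fourier_sin f k * sin (real k * x))"

definition trig_polys :: "nat \<Rightarrow> (real \<Rightarrow> real) set" where
  "trig_polys m = {p. \<exists>a b :: nat \<Rightarrow> real. \<forall>x.
      p x = a 0 + (\<Sum>k=1..m. a k * cos (real k * x) + b k * sin (real k * x))}"

text \<open>Uniform norm (extended-real valued, so that unboundedness is not hidden).\<close>
definition sup_norm :: "(real \<Rightarrow> real) \<Rightarrow> ereal" where
  "sup_norm g = (SUP x. ereal \<bar>g x\<bar>)"

definition Fourier_error :: "(real \<Rightarrow> real) \<Rightarrow> real \<Rightarrow> nat \<Rightarrow> ereal" where
  "Fourier_error \<psi> \<beta> n =
     (SUP f\<in>C_class \<psi> \<beta>. sup_norm (\<lambda>x. f x - fourier_partial_sum f (n - 1) x))"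

definition best_approx :: "(real \<Rightarrow> real) \<Rightarrow> real \<Rightarrow> nat \<Rightarrow> ereal" where
  "best_approx \<psi> \<beta> n =
     (SUP f\<in>C_class \<psi> \<beta>. INF p\<in>trig_polys (n - 1). sup_norm (\<lambda>x. f x - p x))"

end

theory Submission imports Defs begin

lemma sin_shift_int: "sin ((y::real) + 2 * pi * of_int j) = sin y"
  by (simp add: sin_add)

lemma int_cos_lin:
  fixes j :: int
  shows "((\<lambda>x. cos (of_int j * x - d)) has_integral (if j = 0 then 2*pi*cos d else 0)) {-pi..pi}"
proof (cases "j = 0")
  case True
  then show ?thesis using has_integral_const_real[of "cos d" "-pi" pi] by (simp add: algebra_simps)
next
  case False
  have d: "((\<lambda>x. sin (of_int j * x - d) / of_int j) has_real_derivative cos (of_int j * x - d)) (at x within {-pi..pi})" for x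
    using False by (auto intro!: derivative_eq_intros)
  have "((\<lambda>x. cos (of_int j * x - d)) has_integral
          (sin (of_int j * pi - d) / of_int j - sin (of_int j * (-pi) - d) / of_int j)) {-pi..pi}"
    by (rule fundamental_theorem_of_calculus) (auto simp: has_real_derivative_iff_has_vector_derivative[symmetric] intro: d)
  moreover have "sin (of_int j * pi - d) = sin (of_int j * (-pi) - d)"
    using sin_shift_int[of "of_int j * (-pi) - d" j] by (simp add: algebra_simps)
  ultimately show ?thesis using False by simp
qed

lemma cos_orth:
  fixes k L :: nat assumes "L \<ge> 1"
  shows "((\<lambda>x. cos (real k * x - a) * cos (real L * x - b)) has_integral
          (if k = L then pi * cos (a - b) else 0)) {-pi..pi}"
proof -
  have eq: "cos (real k * x - a) * cos (real L * x - b) =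
     cos (of_int (int k - int L) * x - (a - b)) / 2 + cos (of_int (int k + int L) * x - (a + b)) / 2" for x
    unfolding cos_times_cos by (simp add: algebra_simps add_divide_distrib)
  have 1: "((\<lambda>x. cos (of_int (int k - int L) * x - (a - b)) / 2) has_integral
        (if k = L then pi * cos (a - b) else 0)) {-pi..pi}"
    using has_integral_divide[OF int_cos_lin[of "int k - int L" "a - b"], of 2] by auto
  have 2: "((\<lambda>x. cos (of_int (int k + int L) * x - (a + b)) / 2) has_integral 0) {-pi..pi}"
    using has_integral_divide[OF int_cos_lin[of "int k + int L" "a + b"], of 2] assms by auto
  show ?thesis unfolding eq using has_integral_add[OF 1 2] by simp
qed

definition Dk :: "nat \<Rightarrow> real \<Rightarrow> real" where
  "Dk l x = 1 + 2 * (\<Sum>j=1..l. cos (real j * x))"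

definition Fej :: "nat \<Rightarrow> real \<Rightarrow> real" where
  "Fej m x = real m + 1 + 2 * (\<Sum>j=1..m. (real m + 1 - real j) * cos (real j * x))"

lemma Dk_mult: "Dk l x * (1 - cos x) = cos (real l * x) - cos (real (Suc l) * x)"
proof (induction l)
  case 0
  then show ?case by (simp add: Dk_def)
next
  case (Suc l)
  have "Dk (Suc l) x = Dk l x + 2 * cos (real (Suc l) * x)"
    by (simp add: Dk_def)
  moreover have "2 * cos (real (Suc l) * x) * (1 - cos x) =
      2 * cos (real (Suc l) * x) - cos (real (Suc (Suc l)) * x) - cos (real l * x)"
  proof -
    have a: "real (Suc (Suc l)) * x = real (Suc l) * x + x" "real l * x = real (Suc l) * x - x"
      by (simp_all add: algebra_simps)
    show ?thesis unfolding a cos_add cos_diff by (simp add: algebra_simps)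
  qed
  ultimately show ?case using Suc by (simp add: algebra_simps)
qed

lemma Fej_Suc: "Fej (Suc m) x = Fej m x + Dk (Suc m) x"
proof -
  have "(\<Sum>j=1..Suc m. (real (Suc m) + 1 - real j) * cos (real j * x)) =
        (\<Sum>j=1..m. (real (Suc m) + 1 - real j) * cos (real j * x)) + cos (real (Suc m) * x)"
    by simp
  also have "(\<Sum>j=1..m. (real (Suc m) + 1 - real j) * cos (real j * x)) =
        (\<Sum>j=1..m. (real m + 1 - real j) * cos (real j * x)) + (\<Sum>j=1..m. cos (real j * x))"
    by (simp add: sum.distrib[symmetric] algebra_simps)
  finally show ?thesis unfolding Fej_def Dk_def by (simp add: algebra_simps)
qed

lemma Fej_mult: "Fej m x * (1 - cos x) = 1 - cos (real (Suc m) * x)"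
proof (induction m)
  case 0
  then show ?case by (simp add: Fej_def)
next
  case (Suc m)
  then show ?case unfolding Fej_Suc distrib_right Dk_mult by simp
qed

lemma cos_nat_mult_one: "cos x = 1 \<Longrightarrow> cos (real j * x) = 1"
proof (induction j)
  case (Suc j)
  have "sin x = 0" using Suc.prems sin_cos_squared_add[of x] by (simp add: power2_eq_square)
  then show ?case using Suc by (simp add: distrib_right cos_add)
qed simp

lemma Fej_nonneg: "Fej m x \<ge> 0"
proof (cases "cos x = 1")
  case True
  then have "(\<Sum>j=1..m. (real m + 1 - real j) * cos (real j * x)) \<ge> 0"
    by (intro sum_nonneg) (simp add: cos_nat_mult_one)
  then show ?thesis unfolding Fej_def by simp
next
  case False
  then have "1 - cos x > 0" using cos_le_one[of x] by linarith
  moreover have "Fej m x * (1 - cos x) \<ge> 0" unfolding Fej_mult using cos_le_one by simp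
  ultimately show ?thesis by (simp add: zero_le_mult_iff)
qed

definition wF :: "nat \<Rightarrow> nat \<Rightarrow> nat \<Rightarrow> real" where
  "wF N m k = max 0 (real m + 1 - \<bar>real k - real N\<bar>)"

lemma Fej_cos_expand:
  assumes "m < N"
  shows "Fej m x * cos (real N * x - b) = (real m + 1) * cos (real N * x - b) +
     (\<Sum>j=1..m. (real m + 1 - real j) * (cos (real (N + j) * x - b) + cos (real (N - j) * x - b)))"
proof -
  have t: "2 * cos (real j * x) * cos (real N * x - b) = cos (real (N + j) * x - b) + cos (real (N - j) * x - b)"
    if "j \<in> {1..m}" for j
  proof -
    have "j \<le> N" using that assms by auto
    then have e: "real (N - j) * x - b = (real N * x - b) - real j * x" "real (N + j) * x - b = (real N * x - b) + real j * x"
      by (auto simp: of_nat_diff algebra_simps)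
    show ?thesis unfolding e cos_add cos_diff by (simp add: algebra_simps)
  qed
  have "Fej m x * cos (real N * x - b) = (real m + 1) * cos (real N * x - b) +
     (\<Sum>j=1..m. (real m + 1 - real j) * (2 * cos (real j * x) * cos (real N * x - b)))"
    unfolding Fej_def by (simp add: algebra_simps sum_distrib_left sum_distrib_right)
  also have "\<dots> = (real m + 1) * cos (real N * x - b) +
     (\<Sum>j=1..m. (real m + 1 - real j) * (cos (real (N + j) * x - b) + cos (real (N - j) * x - b)))"
    using t by (intro arg_cong2[where f="(+)"] refl sum.cong) auto
  finally show ?thesis .
qed

lemma sum_kron:
  "(\<Sum>j\<in>S. (if k = f j then g j else 0)) = (\<Sum>j\<in>S. (if j = a then (if k = f a then g a else 0) else 0))"
  if "\<And>j. j \<in> S \<Longrightarrow> k = f j \<longleftrightarrow> j = a" for S :: "nat set" and k a :: nat and f and g :: "nat \<Rightarrow> real"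
  using that by (intro sum.cong) auto

lemma wF_sum:
  assumes "m < N"
  shows "(real m + 1) * (if k = N then 1 else 0) +
     (\<Sum>j=1..m. (real m + 1 - real j) * ((if k = N + j then 1 else 0) + (if k = N - j then 1 else 0))) = wF N m k"
proof -
  have split: "(\<Sum>j=1..m. (real m + 1 - real j) * ((if k = N + j then 1 else 0) + (if k = N - j then 1 else 0))) =
     (\<Sum>j=1..m. (if k = N + j then real m + 1 - real j else 0)) + (\<Sum>j=1..m. (if k = N - j then real m + 1 - real j else 0))"
    unfolding sum.distrib[symmetric] by (intro sum.cong refl) (simp add: algebra_simps)
  consider "k = N" | "k > N" | "k < N" by linarith
  then show ?thesis
  proof cases
    case 1
    have "(\<Sum>j=1..m. (if k = N + j then real m + 1 - real j else 0)) = 0" using 1 by (intro sum.neutral) auto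
    moreover have "(\<Sum>j=1..m. (if k = N - j then real m + 1 - real j else 0)) = 0" using 1 assms by (intro sum.neutral) auto
    ultimately show ?thesis unfolding split using 1 by (simp add: wF_def)
  next
    case 2
    have "(\<Sum>j=1..m. (if k = N - j then real m + 1 - real j else 0)) = 0" using 2 assms by (intro sum.neutral) auto
    moreover have "(\<Sum>j=1..m. (if k = N + j then real m + 1 - real j else 0)) =
        (\<Sum>j=1..m. (if j = k - N then real m + 1 - real j else 0))"
      using 2 by (intro sum.cong) auto
    moreover have "\<dots> = (if k - N \<in> {1..m} then real m + 1 - real (k - N) else 0)"
      by (simp add: sum.delta')
    moreover have "\<dots> = wF N m k" using 2 by (auto simp: wF_def of_nat_diff)
    ultimately show ?thesis unfolding split using 2 by simp
  next
    case 3
    have "(\<Sum>j=1..m. (if k = N + j then real m + 1 - real j else 0)) = 0" using 3 by (intro sum.neutral) auto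
    moreover have "(\<Sum>j=1..m. (if k = N - j then real m + 1 - real j else 0)) =
        (\<Sum>j=1..m. (if j = N - k then real m + 1 - real j else 0))"
      using 3 assms by (intro sum.cong) auto
    moreover have "\<dots> = (if N - k \<in> {1..m} then real m + 1 - real (N - k) else 0)"
      by (simp add: sum.delta')
    moreover have "\<dots> = wF N m k" using 3 by (auto simp: wF_def of_nat_diff)
    ultimately show ?thesis unfolding split using 3 by simp
  qed
qed

lemma Fej_integral:
  assumes "m < N"
  shows "((\<lambda>x. cos (real k * x - a) * (Fej m x * cos (real N * x - b))) has_integral
           (pi * wF N m k * cos (a - b))) {-pi..pi}"
proof -
  let ?c = "pi * cos (a - b)"
  have I: "((\<lambda>x. cos (real k * x - a) * cos (real L * x - b)) has_integral ?c * (if k = L then 1 else 0)) {-pi..pi}"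
    if "L \<ge> 1" for L
  proof -
    have e: "?c * (if k = L then 1 else 0) = (if k = L then pi * cos (a - b) else 0)" by simp
    show ?thesis by (subst e) (rule cos_orth[OF that])
  qed
  have N1: "N \<ge> 1" "\<And>j. j \<in> {1..m} \<Longrightarrow> N - j \<ge> 1" "\<And>j. N + j \<ge> 1" using assms by auto
  have "((\<lambda>x. (real m + 1) * (cos (real k * x - a) * cos (real N * x - b)) +
     (\<Sum>j=1..m. (real m + 1 - real j) * (cos (real k * x - a) * cos (real (N + j) * x - b) +
          cos (real k * x - a) * cos (real (N - j) * x - b)))) has_integral
     (real m + 1) * (?c * (if k = N then 1 else 0)) +
     (\<Sum>j=1..m. (real m + 1 - real j) * (?c * (if k = N + j then 1 else 0) + ?c * (if k = N - j then 1 else 0))))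
     {-pi..pi}"
    by (intro has_integral_add has_integral_mult_right has_integral_sum finite_atLeastAtMost I N1) auto
  moreover have "(real m + 1) * (?c * (if k = N then 1 else 0)) +
     (\<Sum>j=1..m. (real m + 1 - real j) * (?c * (if k = N + j then 1 else 0) + ?c * (if k = N - j then 1 else 0)))
     = ?c * ((real m + 1) * (if k = N then 1 else 0) +
     (\<Sum>j=1..m. (real m + 1 - real j) * ((if k = N + j then 1 else 0) + (if k = N - j then 1 else 0))))"
    by (simp add: algebra_simps sum_distrib_left)
  moreover have "\<And>x. cos (real k * x - a) * (Fej m x * cos (real N * x - b)) =
      (real m + 1) * (cos (real k * x - a) * cos (real N * x - b)) +
     (\<Sum>j=1..m. (real m + 1 - real j) * (cos (real k * x - a) * cos (real (N + j) * x - b) +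
          cos (real k * x - a) * cos (real (N - j) * x - b)))"
    unfolding Fej_cos_expand[OF assms] by (simp add: algebra_simps sum_distrib_left)
  ultimately show ?thesis unfolding wF_sum[OF assms] by (simp add: algebra_simps)
qed

lemma cont_mult_absint:
  fixes g \<phi> :: "real \<Rightarrow> real"
  assumes g: "continuous_on {a..b} g" and \<phi>: "\<phi> absolutely_integrable_on {a..b}"
  shows "(\<lambda>t. g t * \<phi> t) absolutely_integrable_on {a..b}"
proof (rule absolutely_integrable_bounded_measurable_product_real[OF _ _ _ \<phi>])
  show "g \<in> borel_measurable (lebesgue_on {a..b})"
    using g by (intro continuous_imp_measurable_on_sets_lebesgue) auto
  show "{a..b} \<in> sets lebesgue" by simp
  show "bounded (g ` {a..b})"
    using g by (intro compact_imp_bounded compact_continuous_image) auto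
qed

lemma series_interchange:
  fixes u :: "nat \<Rightarrow> real" and \<phi> :: "real \<Rightarrow> real"
  assumes u0: "\<And>k. u k \<ge> 0" and su: "summable u"
    and \<phi>: "\<phi> absolutely_integrable_on {-pi..pi}"
  shows "(\<lambda>k. u k * integral {-pi..pi} (\<lambda>t. cos (real (Suc k) * (x - t) - c) * \<phi> t)) sums
           integral {-pi..pi} (\<lambda>t. (\<Sum>k. u k * cos (real (Suc k) * (x - t) - c)) * \<phi> t)"
    and "(\<lambda>t. (\<Sum>k. u k * cos (real (Suc k) * (x - t) - c)) * \<phi> t) integrable_on {-pi..pi}"
proof -
  let ?a = "\<lambda>k t. u k * cos (real (Suc k) * (x - t) - c)"
  let ?f = "\<lambda>j t. (\<Sum>k<j. ?a k t) * \<phi> t"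
  let ?g = "\<lambda>t. (\<Sum>k. ?a k t) * \<phi> t"
  let ?h = "\<lambda>t. suminf u * \<bar>\<phi> t\<bar>"
  have sa: "summable (\<lambda>k. ?a k t)" for t
    by (rule summable_comparison_test'[OF su]) (auto simp: abs_mult u0 intro: mult_left_le)
  have fint: "?f j integrable_on {-pi..pi}" for j
    by (intro absolutely_integrable_on_def[THEN iffD1, THEN conjunct1] cont_mult_absint \<phi>)
       (auto intro!: continuous_intros)
  have hint: "?h integrable_on {-pi..pi}"
    using \<phi> by (intro integrable_on_mult_right) (simp add: absolutely_integrable_on_def)
  have le: "norm (?f j t) \<le> ?h t" for j t
  proof -
    have "\<bar>\<Sum>k<j. ?a k t\<bar> \<le> (\<Sum>k<j. u k)"
      by (rule order_trans[OF sum_abs]) (auto intro!: sum_mono simp: abs_mult u0 intro: mult_left_le)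
    also have "\<dots> \<le> suminf u" using su u0 by (intro sum_le_suminf) auto
    finally show ?thesis by (simp add: abs_mult mult_right_mono)
  qed
  have conv: "(\<lambda>j. ?f j t) \<longlonglongrightarrow> ?g t" for t
    by (intro tendsto_mult_right summable_LIMSEQ sa)
  note dc = dominated_convergence[OF fint hint le conv]
  show "?g integrable_on {-pi..pi}" using dc(1) .
  have "integral {-pi..pi} (?f j) = (\<Sum>k<j. u k * integral {-pi..pi} (\<lambda>t. cos (real (Suc k) * (x - t) - c) * \<phi> t))" for j
  proof -
    have i: "(\<lambda>t. cos (real (Suc k) * (x - t) - c) * \<phi> t) integrable_on {-pi..pi}" for k
      by (intro absolutely_integrable_on_def[THEN iffD1, THEN conjunct1] cont_mult_absint \<phi>)
         (auto intro!: continuous_intros)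
    have "integral {-pi..pi} (?f j) = integral {-pi..pi} (\<lambda>t. \<Sum>k<j. u k * (cos (real (Suc k) * (x - t) - c) * \<phi> t))"
      by (simp add: sum_distrib_right mult.assoc)
    also have "\<dots> = (\<Sum>k<j. integral {-pi..pi} (\<lambda>t. u k * (cos (real (Suc k) * (x - t) - c) * \<phi> t)))"
      by (rule Henstock_Kurzweil_Integration.integral_sum) (use i in \<open>auto intro!: integrable_on_mult_right\<close>)
    also have "\<dots> = (\<Sum>k<j. u k * integral {-pi..pi} (\<lambda>t. cos (real (Suc k) * (x - t) - c) * \<phi> t))"
      by simp
    finally show ?thesis .
  qed
  then show "(\<lambda>k. u k * integral {-pi..pi} (\<lambda>t. cos (real (Suc k) * (x - t) - c) * \<phi> t)) sums integral {-pi..pi} ?g"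
    unfolding sums_def using dc(2) by simp
qed

lemma series_interchange_bdd:
  fixes u :: "nat \<Rightarrow> real" and b :: "nat \<Rightarrow> real \<Rightarrow> real"
  assumes u0: "\<And>k. u k \<ge> 0" and su: "summable u"
    and bi: "\<And>k. b k integrable_on {-pi..pi}"
    and bb: "\<And>k t. t \<in> {-pi..pi} \<Longrightarrow> \<bar>b k t\<bar> \<le> B"
  shows "(\<lambda>k. u k * integral {-pi..pi} (b k)) sums integral {-pi..pi} (\<lambda>t. \<Sum>k. u k * b k t)"
    and "(\<lambda>t. \<Sum>k. u k * b k t) integrable_on {-pi..pi}"
proof -
  let ?S = "{-pi..pi}"
  let ?f = "\<lambda>j t. \<Sum>k<j. u k * b k t"
  let ?g = "\<lambda>t. \<Sum>k. u k * b k t"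
  let ?h = "\<lambda>t. suminf u * B"
  have sa: "summable (\<lambda>k. u k * b k t)" if "t \<in> ?S" for t
    by (rule summable_comparison_test'[OF summable_mult2[OF su, of B]])
       (auto simp: abs_mult u0 bb[OF that] intro: mult_left_mono)
  have fint: "?f j integrable_on ?S" for j
    by (intro integrable_sum integrable_on_mult_right bi) auto
  have hint: "?h integrable_on ?S" by (rule integrable_continuous_real) (auto intro: continuous_intros)
  have le: "norm (?f j t) \<le> ?h t" if "t \<in> ?S" for j t
  proof -
    have "\<bar>?f j t\<bar> \<le> (\<Sum>k<j. u k * B)"
      by (rule order_trans[OF sum_abs]) (auto intro!: sum_mono simp: abs_mult u0 bb[OF that] intro: mult_left_mono)
    also have "\<dots> \<le> suminf u * B"
    proof -
      have "B \<ge> 0" using bb[OF that, of 0] by linarith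
      then show ?thesis unfolding sum_distrib_right[symmetric] using su u0
        by (intro mult_right_mono sum_le_suminf) auto
    qed
    finally show ?thesis by simp
  qed
  have conv: "(\<lambda>j. ?f j t) \<longlonglongrightarrow> ?g t" if "t \<in> ?S" for t
    by (intro summable_LIMSEQ sa that)
  note dc = dominated_convergence[OF fint hint le conv]
  show "?g integrable_on ?S" using dc(1) .
  have "integral ?S (?f j) = (\<Sum>k<j. u k * integral ?S (b k))" for j
    by (subst Henstock_Kurzweil_Integration.integral_sum) (auto intro: bi integrable_on_mult_right)
  then show "(\<lambda>k. u k * integral ?S (b k)) sums integral ?S ?g"
    unfolding sums_def using dc(2) by simp
qed

definition Jc :: "real \<Rightarrow> (real \<Rightarrow> real) \<Rightarrow> nat \<Rightarrow> real \<Rightarrow> real" where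
  "Jc c \<phi> k x = integral {-pi..pi} (\<lambda>t. cos (real (Suc k) * (x - t) - c) * \<phi> t)"
definition Ac :: "(real \<Rightarrow> real) \<Rightarrow> nat \<Rightarrow> real" where
  "Ac \<phi> k = integral {-pi..pi} (\<lambda>t. cos (real (Suc k) * t) * \<phi> t)"
definition Bc :: "(real \<Rightarrow> real) \<Rightarrow> nat \<Rightarrow> real" where
  "Bc \<phi> k = integral {-pi..pi} (\<lambda>t. sin (real (Suc k) * t) * \<phi> t)"

lemma cs_int:
  assumes \<phi>: "\<phi> absolutely_integrable_on {-pi..pi}"
  shows "(\<lambda>t. cos (a * t + e) * \<phi> t) integrable_on {-pi..pi}" "(\<lambda>t. sin (a * t + e) * \<phi> t) integrable_on {-pi..pi}"
  by (intro absolutely_integrable_on_def[THEN iffD1, THEN conjunct1] cont_mult_absint \<phi>;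
      auto intro!: continuous_intros)+

lemma Jc_formula:
  assumes \<phi>: "\<phi> absolutely_integrable_on {-pi..pi}"
  shows "Jc c \<phi> k x = cos (real (Suc k) * x - c) * Ac \<phi> k + sin (real (Suc k) * x - c) * Bc \<phi> k"
proof -
  let ?K = "real (Suc k)"
  have e: "cos (?K * (x - t) - c) * \<phi> t =
      cos (?K * x - c) * (cos (?K * t) * \<phi> t) + sin (?K * x - c) * (sin (?K * t) * \<phi> t)" for t
  proof -
    have h: "?K * (x - t) - c = (?K * x - c) - ?K * t" by (simp add: algebra_simps)
    have "cos (?K * (x - t) - c) = cos (?K * x - c) * cos (?K * t) + sin (?K * x - c) * sin (?K * t)"
      unfolding h by (rule cos_diff)
    then show ?thesis by (simp add: algebra_simps)
  qed
  have i1: "(\<lambda>t. cos (?K * t) * \<phi> t) integrable_on {-pi..pi}" using cs_int(1)[OF \<phi>, of ?K 0] by simp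
  have i2: "(\<lambda>t. sin (?K * t) * \<phi> t) integrable_on {-pi..pi}" using cs_int(2)[OF \<phi>, of ?K 0] by simp
  show ?thesis unfolding Jc_def Ac_def Bc_def e
    using i1 i2 by (simp add: integral_add integrable_on_mult_right)
qed

lemma abs_integral_le:
  fixes \<phi> g :: "real \<Rightarrow> real"
  assumes \<phi>: "\<phi> absolutely_integrable_on {-pi..pi}" and g: "\<And>t. \<bar>g t\<bar> \<le> 1"
    and gi: "(\<lambda>t. g t * \<phi> t) integrable_on {-pi..pi}"
  shows "\<bar>integral {-pi..pi} (\<lambda>t. g t * \<phi> t)\<bar> \<le> integral {-pi..pi} (\<lambda>t. \<bar>\<phi> t\<bar>)"
proof -
  have "norm (integral {-pi..pi} (\<lambda>t. g t * \<phi> t)) \<le> integral {-pi..pi} (\<lambda>t. \<bar>\<phi> t\<bar>)"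
  proof (rule integral_norm_bound_integral[OF gi])
    show "(\<lambda>t. \<bar>\<phi> t\<bar>) integrable_on {-pi..pi}" using \<phi> by (simp add: absolutely_integrable_on_def)
    show "norm (g t * \<phi> t) \<le> \<bar>\<phi> t\<bar>" for t
      using g[of t] mult_right_mono[of "\<bar>g t\<bar>" 1 "\<bar>\<phi> t\<bar>"] by (simp add: abs_mult)
  qed
  then show ?thesis by simp
qed

lemma Jc_bound:
  assumes \<phi>: "\<phi> absolutely_integrable_on {-pi..pi}"
  shows "\<bar>Jc c \<phi> k x\<bar> \<le> integral {-pi..pi} (\<lambda>t. \<bar>\<phi> t\<bar>)"
  unfolding Jc_def
proof (rule abs_integral_le[OF \<phi>])
  show "(\<lambda>t. cos (real (Suc k) * (x - t) - c) * \<phi> t) integrable_on {-pi..pi}"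
    using cs_int(1)[OF \<phi>, of "- real (Suc k)" "real (Suc k) * x - c"] by (simp add: algebra_simps)
qed simp

lemma Jc_cont:
  assumes \<phi>: "\<phi> absolutely_integrable_on {-pi..pi}"
  shows "continuous_on S (Jc c \<phi> k)"
  unfolding Jc_formula[OF \<phi>, abs_def] by (auto intro!: continuous_intros)

lemma sin_as_cos: "sin y = cos (y - pi / 2)"
  by (simp add: cos_diff)

lemma Jc_cos_integral:
  assumes \<phi>: "\<phi> absolutely_integrable_on {-pi..pi}"
  shows "((\<lambda>t. Jc c \<phi> k t * cos (real j * t - d)) has_integral
     (if j = Suc k then pi * (Ac \<phi> k * cos (d - c) + Bc \<phi> k * cos (d - (c + pi / 2))) else 0)) {-pi..pi}"
proof -
  let ?K = "real (Suc k)"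
  have e: "Jc c \<phi> k t * cos (real j * t - d) = Ac \<phi> k * (cos (real j * t - d) * cos (?K * t - c)) +
        Bc \<phi> k * (cos (real j * t - d) * cos (?K * t - (c + pi / 2)))" for t
  proof -
    have "sin (?K * t - c) = cos (?K * t - (c + pi / 2))" unfolding sin_as_cos by (simp add: algebra_simps)
    then show ?thesis unfolding Jc_formula[OF \<phi>] by (simp add: algebra_simps)
  qed
  have "((\<lambda>t. Ac \<phi> k * (cos (real j * t - d) * cos (?K * t - c)) +
        Bc \<phi> k * (cos (real j * t - d) * cos (?K * t - (c + pi / 2)))) has_integral
      Ac \<phi> k * (if j = Suc k then pi * cos (d - c) else 0) + Bc \<phi> k * (if j = Suc k then pi * cos (d - (c + pi / 2)) else 0)) {-pi..pi}"
    by (intro has_integral_add has_integral_mult_right cos_orth) auto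
  then show ?thesis unfolding e by (rule has_integral_eq_rhs) (simp add: algebra_simps)
qed

lemma f_cos_integral:
  fixes u :: "nat \<Rightarrow> real" and \<phi> f :: "real \<Rightarrow> real"
  assumes u0: "\<And>k. u k \<ge> 0" and su: "summable u"
    and \<phi>: "\<phi> absolutely_integrable_on {-pi..pi}" and I1: "integral {-pi..pi} (\<lambda>t. \<bar>\<phi> t\<bar>) \<le> 1"
    and feq: "\<And>x. f x = a0 / 2 + (1 / pi) * (\<Sum>k. u k * Jc c \<phi> k x)"
  shows "((\<lambda>t. f t * cos (real j * t - d)) has_integral
     (a0 / 2 * (if j = 0 then 2 * pi * cos d else 0) +
      (if j = 0 then 0 else u (j - 1) * (Ac \<phi> (j - 1) * cos (d - c) + Bc \<phi> (j - 1) * cos (d - (c + pi / 2))))))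
     {-pi..pi}"
proof -
  let ?b = "\<lambda>k t. Jc c \<phi> k t * cos (real j * t - d)"
  let ?v = "\<lambda>k. (if j = Suc k then pi * (Ac \<phi> k * cos (d - c) + Bc \<phi> k * cos (d - (c + pi / 2))) else 0)"
  have Jb: "\<bar>Jc c \<phi> k t\<bar> \<le> 1" for k t using Jc_bound[OF \<phi>] I1 order_trans by blast
  have bb: "\<bar>?b k t\<bar> \<le> 1" for k t
    using Jb[of k t] abs_cos_le_one[of "real j * t - d"] by (simp add: abs_mult mult_le_one)
  have bi: "?b k integrable_on {-pi..pi}" for k
    using Jc_cos_integral[OF \<phi>] by blast
  note si = series_interchange_bdd[where b = ?b, OF u0 su bi bb]
  have ib: "integral {-pi..pi} (?b k) = ?v k" for k
    using Jc_cos_integral[OF \<phi>] by blast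
  have sum_v: "(\<lambda>k. u k * ?v k) sums (if j = 0 then 0 else pi * (u (j - 1) * (Ac \<phi> (j - 1) * cos (d - c) + Bc \<phi> (j - 1) * cos (d - (c + pi / 2)))))"
  proof (cases j)
    case 0
    then show ?thesis by simp
  next
    case (Suc i)
    have "(\<lambda>k. u k * ?v k) = (\<lambda>k. if k = i then pi * (u k * (Ac \<phi> k * cos (d - c) + Bc \<phi> k * cos (d - (c + pi / 2)))) else 0)"
      using Suc by (auto simp: fun_eq_iff)
    then show ?thesis using Suc sums_single[of i "\<lambda>k. pi * (u k * (Ac \<phi> k * cos (d - c) + Bc \<phi> k * cos (d - (c + pi / 2))))"] by simp
  qed
  have sJ: "summable (\<lambda>k. u k * Jc c \<phi> k t)" for t
    by (rule summable_comparison_test'[OF su]) (auto simp: abs_mult u0 intro: mult_left_le Jb)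
  have fe: "f t * cos (real j * t - d) = a0 / 2 * cos (real j * t - d) + (1 / pi) * (\<Sum>k. u k * ?b k t)" for t
  proof -
    have m: "(\<Sum>k. u k * ?b k t) = (\<Sum>k. u k * Jc c \<phi> k t) * cos (real j * t - d)"
      using suminf_mult2[OF sJ[of t], of "cos (real j * t - d)"] by (simp add: mult.assoc)
    show ?thesis by (simp only: feq m) (simp add: algebra_simps)
  qed
  have i1: "((\<lambda>t. a0 / 2 * cos (real j * t - d)) has_integral a0 / 2 * (if j = 0 then 2 * pi * cos d else 0)) {-pi..pi}"
    using has_integral_mult_right[OF int_cos_lin[of "int j" d], of "a0/2"] by simp
  have i2: "((\<lambda>t. (1 / pi) * (\<Sum>k. u k * ?b k t)) has_integral (1 / pi) * (if j = 0 then 0 else pi * (u (j - 1) * (Ac \<phi> (j - 1) * cos (d - c) + Bc \<phi> (j - 1) * cos (d - (c + pi / 2)))))) {-pi..pi}"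
  proof -
    have "integral {-pi..pi} (\<lambda>t. \<Sum>k. u k * ?b k t) = (if j = 0 then 0 else pi * (u (j - 1) * (Ac \<phi> (j - 1) * cos (d - c) + Bc \<phi> (j - 1) * cos (d - (c + pi / 2)))))"
      using sums_unique2[OF si(1)[unfolded ib] sum_v] .
    moreover have "((\<lambda>t. \<Sum>k. u k * ?b k t) has_integral integral {-pi..pi} (\<lambda>t. \<Sum>k. u k * ?b k t)) {-pi..pi}"
      using si(2) unfolding has_integral_integral .
    ultimately show ?thesis by (intro has_integral_mult_right) simp
  qed
  show ?thesis unfolding fe by (rule has_integral_eq_rhs[OF has_integral_add[OF i1 i2]]) simp
qed

lemma sum_shift1: "(\<Sum>j=1..n. g (j - 1)) = (\<Sum>k<n. (g k :: real))" for g :: "nat \<Rightarrow> real"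
  by (induction n) (auto simp: sum.cl_ivl_Suc)

lemma partial_sum_eq:
  fixes u :: "nat \<Rightarrow> real" and \<phi> f :: "real \<Rightarrow> real"
  assumes u0: "\<And>k. u k \<ge> 0" and su: "summable u"
    and \<phi>: "\<phi> absolutely_integrable_on {-pi..pi}" and I1: "integral {-pi..pi} (\<lambda>t. \<bar>\<phi> t\<bar>) \<le> 1"
    and feq: "\<And>x. f x = a0 / 2 + (1 / pi) * (\<Sum>k. u k * Jc c \<phi> k x)"
  shows "fourier_partial_sum f i x = a0 / 2 + (1 / pi) * (\<Sum>k<i. u k * Jc c \<phi> k x)"
proof -
  note FI = f_cos_integral[OF u0 su \<phi> I1 feq]
  have fc0: "fourier_cos f 0 = a0"
    using integral_unique[OF FI[of 0 0]] by (simp add: fourier_cos_def)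
  have fcj: "fourier_cos f j = (1 / pi) * (u (j - 1) * (Ac \<phi> (j - 1) * cos c - Bc \<phi> (j - 1) * sin c))" if "j \<ge> 1" for j
  proof -
    have e1: "cos (0 - c) = cos c" "cos (0 - (c + pi / 2)) = - sin c" by (simp_all add: cos_add cos_diff)
    have "integral {-pi..pi} (\<lambda>t. f t * cos (real j * t)) = u (j - 1) * (Ac \<phi> (j - 1) * cos c - Bc \<phi> (j - 1) * sin c)"
      using integral_unique[OF FI[of j 0]] that unfolding e1 diff_zero by simp
    then show ?thesis unfolding fourier_cos_def by simp
  qed
  have fsj: "fourier_sin f j = (1 / pi) * (u (j - 1) * (Ac \<phi> (j - 1) * sin c + Bc \<phi> (j - 1) * cos c))" if "j \<ge> 1" for j
  proof -
    have e: "sin (real j * t) = cos (real j * t - pi / 2)" for t by (simp add: sin_as_cos)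
    have "cos (pi / 2 - c) = sin c" "cos (pi / 2 - (c + pi / 2)) = cos c" by (simp_all add: cos_diff)
    then have "integral {-pi..pi} (\<lambda>t. f t * sin (real j * t)) = u (j - 1) * (Ac \<phi> (j - 1) * sin c + Bc \<phi> (j - 1) * cos c)"
      using integral_unique[OF FI[of j "pi/2"]] that unfolding e by simp
    then show ?thesis unfolding fourier_sin_def by simp
  qed
  have trm: "fourier_cos f j * cos (real j * x) + fourier_sin f j * sin (real j * x) =
       (1 / pi) * (u (j - 1) * Jc c \<phi> (j - 1) x)" if "j \<in> {1..i}" for j
  proof -
    have j: "j \<ge> 1" "real (Suc (j - 1)) = real j" using that by auto
    have cs: "cos (real j * x - c) = cos (real j * x) * cos c + sin (real j * x) * sin c"
      "sin (real j * x - c) = sin (real j * x) * cos c - cos (real j * x) * sin c"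
      by (rule cos_diff, rule sin_diff)
    show ?thesis unfolding fcj[OF j(1)] fsj[OF j(1)] Jc_formula[OF \<phi>] j(2) cs
      by (simp add: algebra_simps)
  qed
  have "fourier_partial_sum f i x = a0 / 2 + (\<Sum>j=1..i. (1 / pi) * (u (j - 1) * Jc c \<phi> (j - 1) x))"
    unfolding fourier_partial_sum_def fc0 using trm by (intro arg_cong2[where f = "(+)"] refl sum.cong) auto
  also have "\<dots> = a0 / 2 + (1 / pi) * (\<Sum>k<i. u k * Jc c \<phi> k x)"
    using sum_shift1[of "\<lambda>k. (1 / pi) * (u k * Jc c \<phi> k x)" i] by (simp add: sum_distrib_left)
  finally show ?thesis .
qed

lemma error_bound:
  fixes u :: "nat \<Rightarrow> real" and \<phi> f :: "real \<Rightarrow> real"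
  assumes u0: "\<And>k. u k \<ge> 0" and su: "summable u"
    and \<phi>: "\<phi> absolutely_integrable_on {-pi..pi}" and I1: "integral {-pi..pi} (\<lambda>t. \<bar>\<phi> t\<bar>) \<le> 1"
    and feq: "\<And>x. f x = a0 / 2 + (1 / pi) * (\<Sum>k. u k * Jc c \<phi> k x)"
  shows "\<bar>f x - fourier_partial_sum f i x\<bar> \<le> (\<Sum>k. u (k + i))"
proof -
  have Jb: "\<bar>Jc c \<phi> k t\<bar> \<le> 1" for k t using Jc_bound[OF \<phi>] I1 order_trans by blast
  have sJ: "summable (\<lambda>k. u k * Jc c \<phi> k x)"
    by (rule summable_comparison_test'[OF su]) (auto simp: abs_mult u0 intro: mult_left_le Jb)
  have "f x - fourier_partial_sum f i x = (1 / pi) * (\<Sum>k. u (k + i) * Jc c \<phi> (k + i) x)"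
    unfolding partial_sum_eq[OF u0 su \<phi> I1 feq] feq suminf_minus_initial_segment[OF sJ]
    by (simp add: algebra_simps)
  also have "\<bar>\<dots>\<bar> \<le> 1 * (\<Sum>k. u (k + i))"
  proof -
    have s1: "summable (\<lambda>k. u (k + i))" using su by (rule summable_ignore_initial_segment)
    have s2: "summable (\<lambda>k. \<bar>u (k + i) * Jc c \<phi> (k + i) x\<bar>)"
      by (rule summable_comparison_test'[OF s1]) (auto simp: abs_mult u0 intro: mult_left_le Jb)
    have "\<bar>\<Sum>k. u (k + i) * Jc c \<phi> (k + i) x\<bar> \<le> (\<Sum>k. \<bar>u (k + i) * Jc c \<phi> (k + i) x\<bar>)"
      by (rule summable_rabs[OF s2])
    also have "\<dots> \<le> (\<Sum>k. u (k + i))"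
      by (rule suminf_le[OF _ s2 s1]) (auto simp: abs_mult u0 intro: mult_left_le Jb)
    finally have "\<bar>\<Sum>k. u (k + i) * Jc c \<phi> (k + i) x\<bar> \<le> (\<Sum>k. u (k + i))" .
    moreover have "1 / pi \<le> 1" using pi_gt3 by simp
    moreover have "0 \<le> (\<Sum>k. u (k + i))" using s1 u0 by (intro suminf_nonneg) auto
    ultimately have "1 / pi * \<bar>\<Sum>k. u (k + i) * Jc c \<phi> (k + i) x\<bar> \<le> 1 * (\<Sum>k. u (k + i))"
      by (intro mult_mono) auto
    then show ?thesis by (simp add: abs_mult)
  qed
  finally show ?thesis by simp
qed

lemma powr_step:
  fixes y \<alpha> :: real assumes y: "y \<ge> 1" and a: "\<alpha> > 1"
  shows "(y + 1) powr (-\<alpha>) \<le> (y powr (1 - \<alpha>) - (y + 1) powr (1 - \<alpha>)) / (\<alpha> - 1)"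
proof -
  have der: "DERIV (\<lambda>t. t powr (1 - \<alpha>)) t :> (1 - \<alpha>) * t powr (1 - \<alpha> - 1)" if "y \<le> t" for t
    using y that by (intro has_real_derivative_powr) auto
  obtain z where z: "y < z" "z < y + 1"
    and e: "(y + 1) powr (1 - \<alpha>) - y powr (1 - \<alpha>) = (y + 1 - y) * ((1 - \<alpha>) * z powr (1 - \<alpha> - 1))"
    using MVT2[of y "y + 1" "\<lambda>t. t powr (1 - \<alpha>)" "\<lambda>t. (1 - \<alpha>) * t powr (1 - \<alpha> - 1)"] der by auto
  have "(y + 1) powr (-\<alpha>) \<le> z powr (-\<alpha>)"
    using z y a by (intro powr_mono2') auto
  then have "(\<alpha> - 1) * (y + 1) powr (-\<alpha>) \<le> (\<alpha> - 1) * z powr (-\<alpha>)" using a by simp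
  also have "\<dots> = y powr (1 - \<alpha>) - (y + 1) powr (1 - \<alpha>)" using e by (simp add: algebra_simps)
  finally show ?thesis using a by (simp add: field_simps)
qed

lemma powr_sum_bound:
  fixes \<alpha> :: real assumes a: "\<alpha> > 1" and n: "n \<ge> 1"
  shows "(\<Sum>k<M. real (k + n + 1) powr (-\<alpha>)) \<le> (real n powr (1 - \<alpha>) - real (n + M) powr (1 - \<alpha>)) / (\<alpha> - 1)"
proof (induction M)
  case 0
  then show ?case by simp
next
  case (Suc M)
  have "real (M + n + 1) powr (-\<alpha>) \<le> (real (n + M) powr (1 - \<alpha>) - real (n + Suc M) powr (1 - \<alpha>)) / (\<alpha> - 1)"
    using powr_step[of "real (n + M)" \<alpha>] a n by (simp add: add.commute add.left_commute)
  then show ?case using Suc by (simp add: diff_divide_distrib)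
qed

lemma theta_tail:
  fixes \<psi> :: "real \<Rightarrow> real"
  assumes pos: "\<And>t. t \<ge> 1 \<Longrightarrow> \<psi> t > 0"
    and a: "\<alpha> > 1" and K: "K > 0"
    and H: "\<And>t1 t2. t1 > t2 \<Longrightarrow> t2 \<ge> 1 \<Longrightarrow> t1 powr \<alpha> * \<psi> t1 \<le> K * (t2 powr \<alpha> * \<psi> t2)"
    and n: "n \<ge> 1"
  shows "summable (\<lambda>k. \<psi> (real (k + n)))"
    and "(\<Sum>k. \<psi> (real (k + n))) \<le> (1 + K / (\<alpha> - 1)) * real n * \<psi> (real n)"
proof -
  let ?C = "(1 + K / (\<alpha> - 1)) * real n * \<psi> (real n)"
  have nn: "\<psi> (real (k + n)) \<ge> 0" for k using pos[of "real (k + n)"] n by auto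
  have np: "real n powr \<alpha> > 0" using n by simp
  have t1: "\<psi> (real (k + n + 1)) \<le> K * real n powr \<alpha> * \<psi> (real n) * real (k + n + 1) powr (-\<alpha>)" for k
  proof -
    have "real (k + n + 1) powr \<alpha> * \<psi> (real (k + n + 1)) \<le> K * (real n powr \<alpha> * \<psi> (real n))"
      using H[of "real n" "real (k + n + 1)"] n by simp
    moreover have "real (k + n + 1) powr \<alpha> > 0" by simp
    ultimately show ?thesis by (simp add: powr_minus field_simps)
  qed
  have ps: "(\<Sum>k<M. \<psi> (real (k + n))) \<le> ?C" for M
  proof -
    have "(\<Sum>k<M. \<psi> (real (k + n))) \<le> (\<Sum>k<Suc M. \<psi> (real (k + n)))"
      using nn[of M] by simp
    also have "\<dots> = \<psi> (real n) + (\<Sum>k<M. \<psi> (real (k + n + 1)))"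
      by (subst sum.lessThan_Suc_shift) (simp add: add.commute add.left_commute)
    also have "(\<Sum>k<M. \<psi> (real (k + n + 1))) \<le> (\<Sum>k<M. K * real n powr \<alpha> * \<psi> (real n) * real (k + n + 1) powr (-\<alpha>))"
      by (intro sum_mono t1)
    also have "\<dots> = K * real n powr \<alpha> * \<psi> (real n) * (\<Sum>k<M. real (k + n + 1) powr (-\<alpha>))"
      by (simp add: sum_distrib_left)
    also have "\<dots> \<le> K * real n powr \<alpha> * \<psi> (real n) * (real n powr (1 - \<alpha>) / (\<alpha> - 1))"
    proof (intro mult_left_mono)
      show "(\<Sum>k<M. real (k + n + 1) powr (-\<alpha>)) \<le> real n powr (1 - \<alpha>) / (\<alpha> - 1)"
        using powr_sum_bound[OF a n, of M] a by (smt (verit) divide_right_mono powr_ge_zero)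
      show "0 \<le> K * real n powr \<alpha> * \<psi> (real n)" using K pos[of "real n"] n by simp
    qed
    also have "real n powr \<alpha> * real n powr (1 - \<alpha>) = real n"
      using n by (simp add: powr_add[symmetric])
    then have "K * real n powr \<alpha> * \<psi> (real n) * (real n powr (1 - \<alpha>) / (\<alpha> - 1)) = K / (\<alpha> - 1) * real n * \<psi> (real n)"
      by (simp add: field_simps)
    finally have "(\<Sum>k<M. \<psi> (real (k + n))) \<le> \<psi> (real n) + K / (\<alpha> - 1) * real n * \<psi> (real n)" by simp
    also have "\<dots> \<le> ?C" using n pos[of "real n"] by (simp add: algebra_simps)
    finally show ?thesis .
  qed
  show sm: "summable (\<lambda>k. \<psi> (real (k + n)))"
  proof (rule bounded_imp_summable[OF nn])
    fix M show "(\<Sum>k\<le>M. \<psi> (real (k + n))) \<le> ?C" using ps[of "Suc M"] by (simp only: lessThan_Suc_atMost)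
  qed
  show "(\<Sum>k. \<psi> (real (k + n))) \<le> ?C"
    by (rule suminf_le_const[OF sm ps])
qed

lemma Fej_cont: "continuous_on S (Fej m)"
  unfolding Fej_def[abs_def] by (auto intro!: continuous_intros)

lemma Fej_int: "(Fej m has_integral 2 * pi * (real m + 1)) {-pi..pi}"
proof -
  have c0: "((\<lambda>x. cos (real j * x)) has_integral 0) {-pi..pi}" if "j \<in> {1..m}" for j
    using int_cos_lin[of "int j" 0] that by simp
  have "((\<lambda>x. (real m + 1) + 2 * (\<Sum>j=1..m. (real m + 1 - real j) * cos (real j * x))) has_integral
      (real m + 1) * (2 * pi) + 2 * (\<Sum>j=1..m. (real m + 1 - real j) * 0)) {-pi..pi}"
    using has_integral_const_real[of "real m + 1" "-pi" pi]
    by (intro has_integral_add has_integral_mult_right has_integral_sum c0) (auto simp: algebra_simps)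
  then show ?thesis unfolding Fej_def[abs_def] by (simp add: algebra_simps)
qed

lemma cos_nat_period: "cos (real j * (t + 2 * pi)) = cos (real j * t)"
proof -
  have "real j * (t + 2 * pi) = real j * t + 2 * pi * of_int (int j)" by (simp add: algebra_simps)
  then show ?thesis using cos_int_2pin[of "int j"] sin_int_2pin[of "int j"] by (simp add: cos_add)
qed

lemma Fej_period: "Fej m (t + 2 * pi) = Fej m t"
  unfolding Fej_def by (simp only: cos_nat_period)

definition phi0 :: "nat \<Rightarrow> nat \<Rightarrow> real \<Rightarrow> real" where
  "phi0 N m t = Fej m t * cos (real N * t) / (2 * pi * (real m + 1))"

lemma phi0_cont: "continuous_on S (phi0 N m)"
  unfolding phi0_def[abs_def] by (auto intro!: continuous_intros Fej_cont[THEN continuous_on_subset])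

lemma phi0_absint: "phi0 N m absolutely_integrable_on {-pi..pi}"
  by (rule absolutely_integrable_continuous_real[OF phi0_cont])

lemma phi0_period: "phi0 N m (t + 2 * pi) = phi0 N m t"
  unfolding phi0_def Fej_period cos_nat_period ..

lemma phi0_int0:
  assumes "m + 1 < N"
  shows "integral {-pi..pi} (phi0 N m) = 0"
proof -
  have w: "wF N m 0 = 0" using assms by (simp add: wF_def)
  have "((\<lambda>x. cos (real 0 * x - 0) * (Fej m x * cos (real N * x - 0))) has_integral 0) {-pi..pi}"
    using Fej_integral[of m N 0 0 0] assms unfolding w by simp
  then have "((\<lambda>x. (Fej m x * cos (real N * x)) / (2 * pi * (real m + 1))) has_integral 0 / (2 * pi * (real m + 1))) {-pi..pi}"
    by (intro has_integral_divide) simp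
  then show ?thesis unfolding phi0_def[abs_def] by (intro integral_unique) simp
qed

lemma phi0_L1:
  shows "integral {-pi..pi} (\<lambda>t. \<bar>phi0 N m t\<bar>) \<le> 1"
proof -
  have i1: "(\<lambda>t. \<bar>phi0 N m t\<bar>) integrable_on {-pi..pi}"
    using phi0_absint by (simp add: absolutely_integrable_on_def)
  have i2: "((\<lambda>t. Fej m t / (2 * pi * (real m + 1))) has_integral 2 * pi * (real m + 1) / (2 * pi * (real m + 1))) {-pi..pi}"
    by (intro has_integral_divide Fej_int)
  have le: "\<bar>phi0 N m t\<bar> \<le> Fej m t / (2 * pi * (real m + 1))" for t
  proof -
    have "\<bar>Fej m t * cos (real N * t)\<bar> \<le> Fej m t"
      using Fej_nonneg[of m t] abs_cos_le_one[of "real N * t"] by (simp add: abs_mult mult_left_le)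
    then show ?thesis unfolding phi0_def by (simp add: divide_right_mono)
  qed
  have "integral {-pi..pi} (\<lambda>t. \<bar>phi0 N m t\<bar>) \<le> 2 * pi * (real m + 1) / (2 * pi * (real m + 1))"
    using has_integral_le[OF i1[unfolded has_integral_integral] i2] le by blast
  then show ?thesis by simp
qed

lemma Jc_phi0:
  assumes "m < N"
  shows "Jc c (phi0 N m) k x = wF N m (Suc k) * cos (real (Suc k) * x - c) / (2 * (real m + 1))"
proof -
  let ?K = "real (Suc k)"
  have e: "cos (?K * (x - t) - c) * phi0 N m t =
     (cos (?K * t - (?K * x - c)) * (Fej m t * cos (real N * t - 0))) / (2 * pi * (real m + 1))" for t
  proof -
    have "?K * (x - t) - c = - (?K * t - (?K * x - c))" by (simp add: algebra_simps)
    then have "cos (?K * (x - t) - c) = cos (?K * t - (?K * x - c))" by (metis cos_minus)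
    then show ?thesis unfolding phi0_def by simp
  qed
  have "((\<lambda>t. cos (?K * (x - t) - c) * phi0 N m t) has_integral
        (pi * wF N m (Suc k) * cos ((?K * x - c) - 0)) / (2 * pi * (real m + 1))) {-pi..pi}"
    unfolding e by (intro has_integral_divide Fej_integral assms)
  then show ?thesis unfolding Jc_def by (simp add: integral_unique)
qed

lemma kernel_conv_sums:
  fixes \<psi> :: "real \<Rightarrow> real"
  assumes u0: "\<And>k. \<psi> (real (Suc k)) \<ge> 0" and su: "summable (\<lambda>k. \<psi> (real (Suc k)))"
    and \<phi>: "\<phi> absolutely_integrable_on {-pi..pi}"
  shows "(\<lambda>k. \<psi> (real (Suc k)) * Jc (\<beta> * pi / 2) \<phi> k x) sums
           integral {-pi..pi} (\<lambda>t. Psi_kernel \<psi> \<beta> (x - t) * \<phi> t)"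
  using series_interchange(1)[of "\<lambda>k. \<psi> (real (Suc k))" \<phi> x "\<beta> * pi / 2", OF u0 su \<phi>]
  unfolding Jc_def Psi_kernel_def .

lemma class_repr:
  fixes \<psi> :: "real \<Rightarrow> real"
  assumes u0: "\<And>k. \<psi> (real (Suc k)) \<ge> 0" and su: "summable (\<lambda>k. \<psi> (real (Suc k)))"
    and f: "f \<in> C_class \<psi> \<beta>"
  obtains a0 \<phi> where "\<phi> absolutely_integrable_on {-pi..pi}" "integral {-pi..pi} (\<lambda>t. \<bar>\<phi> t\<bar>) \<le> 1"
    "\<And>x. f x = a0 / 2 + (1 / pi) * (\<Sum>k. \<psi> (real (Suc k)) * Jc (\<beta> * pi / 2) \<phi> k x)"
proof -
  obtain a0 \<phi> where \<phi>: "\<phi> absolutely_integrable_on {-pi..pi}" and I1: "integral {-pi..pi} (\<lambda>t. \<bar>\<phi> t\<bar>) \<le> 1"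
    and fe: "\<And>x. f x = a0 / 2 + (1 / pi) * integral {-pi..pi} (\<lambda>t. Psi_kernel \<psi> \<beta> (x - t) * \<phi> t)"
    using f unfolding C_class_def by blast
  show ?thesis
  proof (rule that[OF \<phi> I1])
    fix x show "f x = a0 / 2 + (1 / pi) * (\<Sum>k. \<psi> (real (Suc k)) * Jc (\<beta> * pi / 2) \<phi> k x)"
      unfolding fe sums_unique[OF kernel_conv_sums[OF u0 su \<phi>]] ..
  qed
qed

definition f0 :: "(real \<Rightarrow> real) \<Rightarrow> real \<Rightarrow> nat \<Rightarrow> nat \<Rightarrow> real \<Rightarrow> real" where
  "f0 \<psi> \<beta> N m x = 0 / 2 + (1 / pi) * integral {-pi..pi} (\<lambda>t. Psi_kernel \<psi> \<beta> (x - t) * phi0 N m t)"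

lemma f0_class:
  assumes "m + 1 < N"
  shows "f0 \<psi> \<beta> N m \<in> C_class \<psi> \<beta>"
  unfolding C_class_def
  apply (rule CollectI)
  apply (rule exI[of _ 0], rule exI[of _ "phi0 N m"])
  using phi0_period phi0_absint phi0_int0[OF assms] phi0_L1 by (simp add: f0_def)

lemma f0_eq:
  fixes \<psi> :: "real \<Rightarrow> real"
  assumes u0: "\<And>k. \<psi> (real (Suc k)) \<ge> 0" and su: "summable (\<lambda>k. \<psi> (real (Suc k)))"
    and mN: "m < N"
  shows "f0 \<psi> \<beta> N m x = (\<Sum>k<N + m. (\<psi> (real (Suc k)) * wF N m (Suc k) / (2 * pi * (real m + 1))) *
            cos (real (Suc k) * x - \<beta> * pi / 2))"
proof -
  let ?t = "\<lambda>k. \<psi> (real (Suc k)) * Jc (\<beta> * pi / 2) (phi0 N m) k x"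
  have z: "?t k = 0" if "k \<notin> {..<N + m}" for k
  proof -
    have "wF N m (Suc k) = 0" using that by (simp add: wF_def)
    then show ?thesis unfolding Jc_phi0[OF mN] by simp
  qed
  have "integral {-pi..pi} (\<lambda>t. Psi_kernel \<psi> \<beta> (x - t) * phi0 N m t) = (\<Sum>k<N + m. ?t k)"
    using sums_unique2[OF kernel_conv_sums[OF u0 su phi0_absint] sums_finite[of "{..<N+m}" ?t]] z by simp
  then show ?thesis unfolding f0_def Jc_phi0[OF mN]
    by (simp add: sum_distrib_left algebra_simps)
qed

lemma dual_bound:
  fixes f p :: "real \<Rightarrow> real" and v :: "nat \<Rightarrow> real"
  assumes mN: "m < N"
    and feq: "\<And>x. f x = (\<Sum>k<R. v k * cos (real (Suc k) * x - c))"
    and p: "p \<in> trig_polys d" and wz: "\<And>j. j \<le> d \<Longrightarrow> wF N m j = 0"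
    and M: "\<And>x. \<bar>f x - p x\<bar> \<le> M"
  shows "(\<Sum>k<R. v k * (pi * wF N m (Suc k))) \<le> M * (2 * pi * (real m + 1))"
proof -
  let ?H = "\<lambda>x. Fej m x * cos (real N * x - c)"
  obtain a b where pe: "\<And>x. p x = a 0 + (\<Sum>k=1..d. a k * cos (real k * x) + b k * sin (real k * x))"
    using p unfolding trig_polys_def by blast
  have If: "((\<lambda>x. f x * ?H x) has_integral (\<Sum>k<R. v k * (pi * wF N m (Suc k)))) {-pi..pi}"
  proof -
    have "((\<lambda>x. \<Sum>k<R. v k * (cos (real (Suc k) * x - c) * ?H x)) has_integral
        (\<Sum>k<R. v k * (pi * wF N m (Suc k) * cos (c - c)))) {-pi..pi}"
      by (intro has_integral_sum has_integral_mult_right Fej_integral mN) auto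
    moreover have "f x * ?H x = (\<Sum>k<R. v k * (cos (real (Suc k) * x - c) * ?H x))" for x
      unfolding feq sum_distrib_right by (simp add: mult.assoc)
    ultimately show ?thesis by simp
  qed
  have Ip: "((\<lambda>x. p x * ?H x) has_integral 0) {-pi..pi}"
  proof -
    have I: "((\<lambda>x. cos (real j * x - e) * ?H x) has_integral 0) {-pi..pi}" if "j \<le> d" for j e
      using Fej_integral[OF mN, of j e c] wz[OF that] by simp
    have I0: "(?H has_integral 0) {-pi..pi}"
      using I[of 0 0] by simp
    have "((\<lambda>x. a 0 * ?H x + (\<Sum>k=1..d. a k * (cos (real k * x - 0) * ?H x) +
          b k * (cos (real k * x - pi / 2) * ?H x))) has_integral a 0 * 0 + (\<Sum>k=1..d. a k * 0 + b k * 0)) {-pi..pi}"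
      by (intro has_integral_add has_integral_mult_right has_integral_sum I I0) auto
    moreover have "p x * ?H x = a 0 * ?H x + (\<Sum>k=1..d. a k * (cos (real k * x - 0) * ?H x) +
          b k * (cos (real k * x - pi / 2) * ?H x))" for x
    proof -
      have e: "(a k * cos (real k * x) + b k * sin (real k * x)) * ?H x = a k * (cos (real k * x - 0) * ?H x) + b k * (cos (real k * x - pi/2) * ?H x)" for k
        unfolding sin_as_cos[of "real k * x"] diff_zero by (simp only: distrib_right mult.assoc)
      show ?thesis by (simp only: pe distrib_right[of "a 0"] sum_distrib_right e)
    qed
    ultimately show ?thesis by simp
  qed
  have Id: "((\<lambda>x. (f x - p x) * ?H x) has_integral (\<Sum>k<R. v k * (pi * wF N m (Suc k)))) {-pi..pi}"
    using has_integral_diff[OF If Ip] by (simp add: algebra_simps)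
  have IM: "((\<lambda>x. M * Fej m x) has_integral M * (2 * pi * (real m + 1))) {-pi..pi}"
    by (intro has_integral_mult_right Fej_int)
  have le: "(f x - p x) * ?H x \<le> M * Fej m x" for x
  proof -
    have "(f x - p x) * ?H x \<le> \<bar>f x - p x\<bar> * \<bar>?H x\<bar>" by (metis abs_ge_self abs_mult)
    also have "\<bar>?H x\<bar> \<le> Fej m x"
      using Fej_nonneg[of m x] abs_cos_le_one[of "real N * x - c"] by (simp add: abs_mult mult_left_le)
    then have "\<bar>f x - p x\<bar> * \<bar>?H x\<bar> \<le> M * Fej m x"
      using M[of x] by (intro mult_mono) auto
    finally show ?thesis .
  qed
  show ?thesis using has_integral_le[OF Id IM] le by blast
qed

lemma sup_norm_lower:
  assumes "\<And>M. (\<forall>x. \<bar>g x\<bar> \<le> M) \<Longrightarrow> L \<le> M"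
  shows "ereal L \<le> sup_norm g"
proof (rule ccontr)
  assume "\<not> ereal L \<le> sup_norm g"
  then have lt: "sup_norm g < ereal L" by simp
  have ge: "ereal \<bar>g x\<bar> \<le> sup_norm g" for x unfolding sup_norm_def by (rule SUP_upper) simp
  obtain S where S: "sup_norm g = ereal S"
    using lt ge[of 0] by (cases "sup_norm g") auto
  have "\<forall>x. \<bar>g x\<bar> \<le> S" using ge unfolding S by simp
  then have "L \<le> S" using assms by blast
  then show False using lt S by simp
qed

lemma sup_norm_upper:
  assumes "\<And>x. \<bar>g x\<bar> \<le> B"
  shows "sup_norm g \<le> ereal B"
  unfolding sup_norm_def by (rule SUP_least) (simp add: assms)

lemma sq_sum_bound: "(\<Sum>i<r. (real i + 1)^2) \<ge> real r ^ 3 / 3"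
proof (induction r)
  case (Suc r)
  have "real (Suc r) ^ 3 / 3 = real r ^ 3 / 3 + (real r ^ 2 + real r + 1 / 3)"
    by (simp add: power3_eq_cube power2_eq_square algebra_simps)
  also have "\<dots> \<le> (\<Sum>i<r. (real i + 1)^2) + (real r + 1)^2"
    using Suc by (simp add: power2_eq_square algebra_simps)
  finally show ?case by simp
qed simp

lemma wF_sum_bound:
  assumes mN: "m < N"
  shows "(\<Sum>k<N + m. (wF N m (Suc k))^2) \<ge> (real m + 1) ^ 3 / 3"
proof -
  let ?g = "\<lambda>k. (wF N m (Suc k))^2"
  let ?r = "\<lambda>i. N + m - 1 - i"
  have inj: "inj_on ?r {..<Suc m}" using mN by (auto simp: inj_on_def)
  have sub: "?r ` {..<Suc m} \<subseteq> {..<N + m}" using mN by auto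
  have w: "wF N m (Suc (?r i)) = real i + 1" if "i < Suc m" for i
  proof -
    have "Suc (?r i) = N + (m - i)" using that mN by auto
    then show ?thesis using that by (simp add: wF_def of_nat_diff)
  qed
  have "(real m + 1) ^ 3 / 3 \<le> (\<Sum>i<Suc m. (real i + 1)^2)" using sq_sum_bound[of "Suc m"] by (simp add: add.commute)
  also have "\<dots> = (\<Sum>i<Suc m. ?g (?r i))" using w by simp
  also have "\<dots> = (\<Sum>k\<in>?r ` {..<Suc m}. ?g k)" by (subst sum.reindex[OF inj]) (rule sum.cong, auto)
  also have "\<dots> \<le> (\<Sum>k<N + m. ?g k)" by (rule sum_mono2[OF _ sub]) auto
  finally show ?thesis .
qed

lemma aux_pi: "(a::real) / (2 * pi * b) * (pi * c) = a * c / (2 * b)"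
  by (cases "b = 0") (simp_all add: field_simps)

lemma lower_est:
  fixes \<psi> :: "real \<Rightarrow> real"
  assumes pos: "\<And>t. t \<ge> 1 \<Longrightarrow> \<psi> t > 0"
    and mono: "\<And>s t. 1 \<le> s \<Longrightarrow> s \<le> t \<Longrightarrow> \<psi> t \<le> \<psi> s"
    and su: "summable (\<lambda>k. \<psi> (real (Suc k)))"
    and n: "n \<ge> 1"
    and p: "p \<in> trig_polys (n - 1)"
    and M: "\<And>x. \<bar>f0 \<psi> \<beta> (2 * n) (n - 1) x - p x\<bar> \<le> M"
  shows "\<psi> (real (4 * n)) * real n / (12 * pi) \<le> M"
proof -
  define N where "N = 2 * n"
  define m where "m = n - 1"
  have mN: "m < N" and m1: "real m + 1 = real n" using n by (auto simp: N_def m_def)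
  have u0: "\<psi> (real (Suc k)) \<ge> 0" for k using pos[of "real (Suc k)"] by simp
  let ?v = "\<lambda>k. \<psi> (real (Suc k)) * wF N m (Suc k) / (2 * pi * (real m + 1))"
  have wz: "wF N m j = 0" if "j \<le> n - 1" for j
    using that n by (auto simp: wF_def N_def m_def of_nat_diff)
  have db: "(\<Sum>k<N + m. ?v k * (pi * wF N m (Suc k))) \<le> M * (2 * pi * (real m + 1))"
    by (rule dual_bound[OF mN f0_eq[OF u0 su mN] p _ M[unfolded N_def[symmetric] m_def[symmetric]]])
       (use wz in \<open>auto simp: m_def\<close>)
  have eqV: "(\<Sum>k<N + m. ?v k * (pi * wF N m (Suc k))) = (\<Sum>k<N + m. \<psi> (real (Suc k)) * (wF N m (Suc k))^2) / (2 * (real m + 1))"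
    unfolding sum_divide_distrib aux_pi by (intro sum.cong refl) (simp add: power2_eq_square mult.assoc)
  have lowk: "\<psi> (real (4 * n)) * (wF N m (Suc k))^2 \<le> \<psi> (real (Suc k)) * (wF N m (Suc k))^2" if "k < N + m" for k
    using that n by (intro mult_right_mono mono) (auto simp: N_def m_def)
  have "\<psi> (real (4 * n)) * ((real m + 1) ^ 3 / 3) \<le> \<psi> (real (4 * n)) * (\<Sum>k<N + m. (wF N m (Suc k))^2)"
    using wF_sum_bound[OF mN] pos[of "real (4 * n)"] n by (intro mult_left_mono) auto
  also have "\<dots> \<le> (\<Sum>k<N + m. \<psi> (real (Suc k)) * (wF N m (Suc k))^2)"
    unfolding sum_distrib_left by (intro sum_mono lowk) auto
  finally have "\<psi> (real (4 * n)) * ((real m + 1) ^ 3 / 3) / (2 * (real m + 1)) \<le> M * (2 * pi * (real m + 1))"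
    using db unfolding eqV by (smt (verit) divide_right_mono of_nat_0_le_iff)
  then have "\<psi> (real (4 * n)) * (real n ^ 3 / 3) / (2 * real n) \<le> M * (2 * pi * real n)" unfolding m1 .
  then have "\<psi> (real (4 * n)) * real n / (12 * pi) * (2 * pi * real n) \<le> M * (2 * pi * real n)"
    using n by (simp add: power3_eq_cube field_simps)
  then have "real n * \<psi> (real (4 * n)) \<le> 12 * (M * pi)" using n pi_gt_zero by (simp add: mult_le_cancel_right)
  then show ?thesis using pi_gt_zero by (simp add: field_simps)
qed

theorem theorem2:
  fixes \<psi> :: "real \<Rightarrow> real"
  assumes "continuous_on {1..} \<psi>"
    and "\<psi> \<in> class_B" and "\<psi> \<in> class_Theta1"
    and "(\<forall>k\<ge>1. Delta2_inv \<psi> k \<ge> 0) \<or> (\<forall>k\<ge>1. Delta2_inv \<psi> k \<le> 0)"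
  shows "\<exists>K1 K2. K1 > 0 \<and> K2 > 0 \<and> (\<forall>\<beta>::real. \<forall>n::nat. n \<ge> 1 \<longrightarrow>
           ereal (K2 * \<psi> (real n) * real n) \<le> best_approx \<psi> \<beta> n \<and>
           best_approx \<psi> \<beta> n \<le> Fourier_error \<psi> \<beta> n \<and>
           Fourier_error \<psi> \<beta> n \<le> ereal (K1 * \<psi> (real n) * real n))"
proof -
  have pos: "\<And>t. t \<ge> 1 \<Longrightarrow> \<psi> t > 0" and mono: "\<And>s t. 1 \<le> s \<Longrightarrow> s \<le> t \<Longrightarrow> \<psi> t \<le> \<psi> s"
    using assms(2) unfolding class_B_def by auto
  obtain KB where KB: "\<And>t. t \<ge> 1 \<Longrightarrow> \<psi> t / \<psi> (2 * t) \<le> KB"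
    using assms(2) unfolding class_B_def by auto
  obtain \<alpha> K where a: "\<alpha> > 1" and K: "K > 0"
    and H: "\<And>t1 t2. t1 > t2 \<Longrightarrow> t2 \<ge> 1 \<Longrightarrow> t1 powr \<alpha> * \<psi> t1 \<le> K * (t2 powr \<alpha> * \<psi> t2)"
    using assms(3) unfolding class_Theta1_def by blast
  have KB1: "KB \<ge> 1"
  proof -
    have a1: "\<psi> 1 \<le> KB * \<psi> 2" using KB[of 1] pos[of 2] by (simp add: field_simps)
    have "\<psi> 2 * 1 \<le> \<psi> 2 * KB" using a1 mono[of 1 2] by (simp add: mult.commute)
    then show ?thesis using pos[of 2] mult_le_cancel_left_pos[of "\<psi> 2" 1 KB] by simp
  qed
  have dbl: "\<psi> t \<le> KB * \<psi> (2 * t)" if "t \<ge> 1" for t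
    using KB[OF that] pos[of "2 * t"] that by (simp add: field_simps)
  have u0: "\<psi> (real (Suc k)) \<ge> 0" for k using pos[of "real (Suc k)"] by simp
  have su: "summable (\<lambda>k. \<psi> (real (Suc k)))"
    using theta_tail(1)[OF pos a K H, of 1] by simp
  define K1 where "K1 = 1 + K / (\<alpha> - 1)"
  define K2 where "K2 = 1 / (12 * pi * KB^2)"
  have K1p: "K1 > 0"
  proof -
    have "K / (\<alpha> - 1) > 0" using a K by simp
    then show ?thesis by (simp add: K1_def)
  qed
  have K2p: "K2 > 0" using KB1 by (simp add: K2_def)
  have main: "ereal (K2 * \<psi> (real n) * real n) \<le> best_approx \<psi> \<beta> n \<and>
           best_approx \<psi> \<beta> n \<le> Fourier_error \<psi> \<beta> n \<and>
           Fourier_error \<psi> \<beta> n \<le> ereal (K1 * \<psi> (real n) * real n)" if n: "n \<ge> 1" for n \<beta>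
  proof (intro conjI)
    let ?f = "f0 \<psi> \<beta> (2 * n) (n - 1)"
    have fC: "?f \<in> C_class \<psi> \<beta>" using n by (intro f0_class) auto
    have four: "\<psi> (real n) * real n / (12 * pi * KB^2) \<le> \<psi> (real (4 * n)) * real n / (12 * pi)"
    proof -
      have "\<psi> (real n) \<le> KB * \<psi> (2 * real n)" using dbl[of "real n"] n by simp
      also have "\<psi> (2 * real n) \<le> KB * \<psi> (2 * (2 * real n))" using dbl[of "2 * real n"] n by simp
      then have "KB * \<psi> (2 * real n) \<le> KB * (KB * \<psi> (2 * (2 * real n)))" using KB1 by simp
      finally have "\<psi> (real n) \<le> KB^2 * \<psi> (real (4 * n))" by (simp add: power2_eq_square mult.assoc)
      then have "\<psi> (real n) * real n \<le> KB^2 * \<psi> (real (4 * n)) * real n" by (simp add: mult_right_mono)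
      then show ?thesis using KB1 pi_gt_zero by (simp add: field_simps)
    qed
    show "ereal (K2 * \<psi> (real n) * real n) \<le> best_approx \<psi> \<beta> n"
      unfolding best_approx_def
    proof (rule SUP_upper2[OF fC], rule INF_greatest)
      fix p assume p: "p \<in> trig_polys (n - 1)"
      show "ereal (K2 * \<psi> (real n) * real n) \<le> sup_norm (\<lambda>x. ?f x - p x)"
      proof (rule sup_norm_lower)
        fix M assume "\<forall>x. \<bar>?f x - p x\<bar> \<le> M"
        then have "\<psi> (real (4 * n)) * real n / (12 * pi) \<le> M"
          by (intro lower_est[OF pos mono su n p]) auto
        then show "K2 * \<psi> (real n) * real n \<le> M" using four by (simp add: K2_def)
      qed
    qed
    show "best_approx \<psi> \<beta> n \<le> Fourier_error \<psi> \<beta> n"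
      unfolding best_approx_def Fourier_error_def
    proof (rule SUP_mono)
      fix f assume f: "f \<in> C_class \<psi> \<beta>"
      have "fourier_partial_sum f (n - 1) \<in> trig_polys (n - 1)"
        unfolding trig_polys_def fourier_partial_sum_def
        by (rule CollectI, rule exI[of _ "\<lambda>k. if k = 0 then fourier_cos f 0 / 2 else fourier_cos f k"],
            rule exI[of _ "fourier_sin f"]) auto
      then show "\<exists>g\<in>C_class \<psi> \<beta>. (INF p\<in>trig_polys (n - 1). sup_norm (\<lambda>x. f x - p x))
                \<le> sup_norm (\<lambda>x. g x - fourier_partial_sum g (n - 1) x)"
        using f by (intro bexI[of _ f] INF_lower)
    qed
    show "Fourier_error \<psi> \<beta> n \<le> ereal (K1 * \<psi> (real n) * real n)"
      unfolding Fourier_error_def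
    proof (rule SUP_least)
      fix f assume f: "f \<in> C_class \<psi> \<beta>"
      obtain a0 \<phi> where \<phi>: "\<phi> absolutely_integrable_on {-pi..pi}" "integral {-pi..pi} (\<lambda>t. \<bar>\<phi> t\<bar>) \<le> 1"
        and fe: "\<And>x. f x = a0 / 2 + (1 / pi) * (\<Sum>k. \<psi> (real (Suc k)) * Jc (\<beta> * pi / 2) \<phi> k x)"
        using class_repr[OF u0 su f] by blast
      show "sup_norm (\<lambda>x. f x - fourier_partial_sum f (n - 1) x) \<le> ereal (K1 * \<psi> (real n) * real n)"
      proof (rule sup_norm_upper)
        fix x
        have "\<bar>f x - fourier_partial_sum f (n - 1) x\<bar> \<le> (\<Sum>k. \<psi> (real (Suc (k + (n - 1)))))"
          by (rule error_bound[OF u0 su \<phi> fe])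
        also have "(\<lambda>k. \<psi> (real (Suc (k + (n - 1))))) = (\<lambda>k. \<psi> (real (k + n)))"
          using n by (auto simp: fun_eq_iff)
        also have "(\<Sum>k. \<psi> (real (k + n))) \<le> K1 * \<psi> (real n) * real n"
          using theta_tail(2)[OF pos a K H n] by (simp add: K1_def mult.assoc mult.commute mult.left_commute)
        finally show "\<bar>f x - fourier_partial_sum f (n - 1) x\<bar> \<le> K1 * \<psi> (real n) * real n" .
      qed
    qed
  qed
  show ?thesis using K1p K2p main by blast
qed

end
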